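(* Let $L:\mathbb{R}^n\times\mathbb{R}\times\mathbb{R}^n\to\mathbb{R}$ be a $C^2$ function satisfying (L1)–(L3) below, and set $L_0(x,v)=L(x,0,v)$: (L1) $L_{vv}(x,r,v)>0$ for all $(x,r,v)$; (L2) for each $r\in\mathbb{R}$ there exist superlinear nondecreasing $\overline{\theta}_r,\theta_r:[0,+\infty)\to[0,+\infty)$ with $\theta_r(0)=0$ and $c_r>0$ such that $\overline{\theta}_r(|v|)\geqslant L(x,r,v)\geqslant\theta_r(|v|)-c_r$ for all $(x,v)$; (L3) there exists $K>0$ with $|L_r(x,r,v)|\leqslant K$ for all $(x,r,v)$. Let $L^\lambda:\mathbb{R}^n\times\mathbb{R}\times\mathbb{R}^n\to\mathbb{R}$ be a $C^2$ function satisfying (L1), (L2) and $|L^\lambda_u(x,u,v)|\leqslant K_\lambda$ for all $(x,u,v)$, and set $L_\lambda(x,v)=L^\lambda(x,0,v)$. Let $x\in\mathbb{R}^n$, $t,R>0$, $u\in\mathbb{R}$, and $y\in\mathbb{R}^n$ with $|y-x|\leqslant R$. Let $\xi\in\Gamma^t_{y,x}$ be a minimizer for $A_t(y,x)$, and let $u^\lambda_\xi$ be the solution of $\dot u^\lambda_\xi(s)=L^\lambda(\xi(s),u^\lambda_\xi(s),\dot\xi(s))$ a.e. on $[0,t]$ with $u^\lambda_\xi(0)=u$. Then for all $s\in[0,t]$, $$|u^\lambda_\xi(s)|\leqslant tF(t,R/t)+C(t)|u|+\exp(K_\lambda t)\int_0^t|L_\lambda(\xi,\dot\xi)-L_0(\xi,\dot\xi)|\,ds,$$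 where $F(t,R/t)=(\overline{\theta}_0(R/t)+2c_0)\exp(K_\lambda t)$ and $C(t)=tK_\lambda\exp(K_\lambda t)+1$.
   Context: $\Gamma^t_{y,x}=\{\xi\in W^{1,1}([0,t],\mathbb{R}^n):\xi(0)=y,\ \xi(t)=x\}$. $A_t(y,x)=\inf_{\xi\in\Gamma^t_{y,x}}\int_0^tL_0(\xi(s),\dot\xi(s))\,ds$ is the least action (fundamental solution) of $L_0$. $\overline{\theta}_0$ and $c_0$ are the function and constant from (L2) for $L$ with $r=0$. *)

theory Defs
  imports "HOL-Analysis.Analysis"
begin

definition C2 :: "('b::euclidean_space \<Rightarrow> real) \<Rightarrow> bool" where
  "C2 f \<longleftrightarrow> (\<exists>f' f''.
      (\<forall>z. (f has_derivative blinfun_apply (f' z)) (at z)) \<and>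
      (\<forall>z. (f' has_derivative blinfun_apply (f'' z)) (at z)) \<and>
      continuous_on UNIV f'')"

definition uncurry3 :: "('a \<Rightarrow> real \<Rightarrow> 'a \<Rightarrow> real) \<Rightarrow> 'a \<times> real \<times> 'a \<Rightarrow> real" where
  "uncurry3 L = (\<lambda>(x, r, v). L x r v)"

text \<open>(L1): L_vv(x,r,v) is positive definite, i.e. w^T L_vv w > 0 for w \<noteq> 0,
  where w^T L_vv w is the second derivative of s \<mapsto> L(x,r,v+sw) at 0.\<close>
definition L1 :: "('a::euclidean_space \<Rightarrow> real \<Rightarrow> 'a \<Rightarrow> real) \<Rightarrow> bool" where
  "L1 L \<longleftrightarrow> (\<forall>x r v w. w \<noteq> 0 \<longrightarrow>
      deriv (deriv (\<lambda>s. L x r (v + s *\<^sub>R w))) 0 > 0)"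

definition superlinear :: "(real \<Rightarrow> real) \<Rightarrow> bool" where
  "superlinear \<theta> \<longleftrightarrow> filterlim (\<lambda>s. \<theta> s / s) at_top at_top"

definition L2_at :: "('a::euclidean_space \<Rightarrow> real \<Rightarrow> 'a \<Rightarrow> real) \<Rightarrow> real
     \<Rightarrow> (real \<Rightarrow> real) \<Rightarrow> (real \<Rightarrow> real) \<Rightarrow> real \<Rightarrow> bool" where
  "L2_at L r \<theta>b \<theta> c \<longleftrightarrow>
     superlinear \<theta>b \<and> superlinear \<theta> \<and>
     mono_on {0..} \<theta>b \<and> mono_on {0..} \<theta> \<and>
     (\<forall>s\<ge>0. \<theta>b s \<ge> 0 \<and> \<theta> s \<ge> 0) \<and> \<theta> 0 = 0 \<and> c > 0 \<and>
     (\<forall>x v. \<theta>b (norm v) \<ge> L x r v \<and> L x r v \<ge> \<theta> (norm v) - c)"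

definition L2 :: "('a::euclidean_space \<Rightarrow> real \<Rightarrow> 'a \<Rightarrow> real) \<Rightarrow> bool" where
  "L2 L \<longleftrightarrow> (\<forall>r. \<exists>\<theta>b \<theta> c. L2_at L r \<theta>b \<theta> c)"

definition partial_r_bounded :: "('a \<Rightarrow> real \<Rightarrow> 'a \<Rightarrow> real) \<Rightarrow> real \<Rightarrow> bool" where
  "partial_r_bounded L K \<longleftrightarrow> (\<forall>x r v. \<bar>deriv (\<lambda>r. L x r v) r\<bar> \<le> K)"

text \<open>W^{1,1}([0,t],R^n): absolutely continuous curves, i.e. indefinite integrals
  of integrable functions.\<close>
definition W11 :: "real \<Rightarrow> (real \<Rightarrow> 'a::euclidean_space) \<Rightarrow> bool" where
  "W11 t \<xi> \<longleftrightarrow> (\<exists>g. g absolutely_integrable_on {0..t} \<and>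
      (\<forall>s\<in>{0..t}. \<xi> s = \<xi> 0 + integral {0..s} g))"

definition Gamma :: "real \<Rightarrow> 'a::euclidean_space \<Rightarrow> 'a \<Rightarrow> (real \<Rightarrow> 'a) set" where
  "Gamma t y x = {\<xi>. W11 t \<xi> \<and> \<xi> 0 = y \<and> \<xi> t = x}"

definition lag_along :: "('a::euclidean_space \<Rightarrow> 'a \<Rightarrow> real) \<Rightarrow> (real \<Rightarrow> 'a) \<Rightarrow> real \<Rightarrow> real" where
  "lag_along L0 \<xi> = (\<lambda>s. L0 (\<xi> s) (vector_derivative \<xi> (at s)))"

text \<open>Since L0 is bounded below, a curve whose action is not integrable has action +\<infinity>;
  so \<xi> is a minimizer iff its action is finite and \<le> every finite action.\<close>
definition minimizer :: "('a::euclidean_space \<Rightarrow> 'a \<Rightarrow> real) \<Rightarrow> real \<Rightarrow> 'a \<Rightarrow> 'a \<Rightarrow> (real \<Rightarrow> 'a) \<Rightarrow> bool" where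
  "minimizer L0 t y x \<xi> \<longleftrightarrow> \<xi> \<in> Gamma t y x \<and>
     lag_along L0 \<xi> integrable_on {0..t} \<and>
     (\<forall>\<eta>\<in>Gamma t y x. lag_along L0 \<eta> integrable_on {0..t} \<longrightarrow>
        integral {0..t} (lag_along L0 \<xi>) \<le> integral {0..t} (lag_along L0 \<eta>))"

end

theory Submission
  imports Defs "HOL-Analysis.Analysis"
begin

lemma vd_quot:
  fixes \<xi> :: "real \<Rightarrow> 'a::real_normed_vector"
  shows "(\<xi> has_vector_derivative l) (at r) \<longleftrightarrow>
         ((\<lambda>h. (1/h) *\<^sub>R (\<xi> (r+h) - \<xi> r)) \<longlongrightarrow> l) (at 0)"
proof -
  have eq: "\<And>h. h \<noteq> 0 \<Longrightarrow> norm (\<xi> (r + h) - \<xi> r - h *\<^sub>R l) / norm h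
        = norm ((1/h) *\<^sub>R (\<xi> (r+h) - \<xi> r) - l)"
  proof -
    fix h :: real assume h: "h \<noteq> 0"
    have "(1/h) *\<^sub>R (\<xi> (r+h) - \<xi> r) - l = (1/h) *\<^sub>R (\<xi> (r + h) - \<xi> r - h *\<^sub>R l)"
      using h by (simp add: algebra_simps)
    then show "norm (\<xi> (r + h) - \<xi> r - h *\<^sub>R l) / norm h
        = norm ((1/h) *\<^sub>R (\<xi> (r+h) - \<xi> r) - l)"
      by (simp add: divide_inverse abs_inverse mult.commute)
  qed
  have "(\<xi> has_vector_derivative l) (at r) \<longleftrightarrow>
      ((\<lambda>h. norm (\<xi> (r + h) - \<xi> r - h *\<^sub>R l) / norm h) \<longlongrightarrow> 0) (at 0)"
    unfolding has_vector_derivative_def has_derivative_at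
    by (simp add: bounded_linear_scaleR_left)
  also have "\<dots> \<longleftrightarrow> ((\<lambda>h. norm ((1/h) *\<^sub>R (\<xi> (r+h) - \<xi> r) - l)) \<longlongrightarrow> 0) (at 0)"
    by (rule tendsto_cong) (use eq[unfolded real_norm_def] in \<open>auto simp: eventually_at intro!: exI[of _ 1]\<close>)
  also have "\<dots> \<longleftrightarrow> ((\<lambda>h. (1/h) *\<^sub>R (\<xi> (r+h) - \<xi> r)) \<longlongrightarrow> l) (at 0)"
    by (simp add: tendsto_norm_zero_iff LIM_zero_iff)
  finally show ?thesis .
qed

lemma cauchy_at0:
  fixes F :: "real \<Rightarrow> 'a::{complete_space,real_normed_vector}"
  shows "(\<exists>l. (F \<longlongrightarrow> l) (at 0)) \<longleftrightarrow>
     (\<forall>e>0. \<exists>d>0. \<forall>h k. 0 < \<bar>h\<bar> \<and> \<bar>h\<bar> < d \<and> 0 < \<bar>k\<bar> \<and> \<bar>k\<bar> < d \<longrightarrow> dist (F h) (F k) < e)"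
proof
  assume "\<exists>l. (F \<longlongrightarrow> l) (at 0)"
  then obtain l where l: "(F \<longlongrightarrow> l) (at 0)" by blast
  have "cauchy_filter (filtermap F (at 0))"
    using l unfolding filterlim_def by (rule nhds_imp_cauchy_filter)
  then have c: "\<forall>e>0. \<exists>P. eventually P (at (0::real)) \<and> (\<forall>x y. P x \<and> P y \<longrightarrow> dist (F x) (F y) < e)"
    by (simp add: cauchy_filter_metric_filtermap)
  show "\<forall>e>0. \<exists>d>0. \<forall>h k. 0 < \<bar>h\<bar> \<and> \<bar>h\<bar> < d \<and> 0 < \<bar>k\<bar> \<and> \<bar>k\<bar> < d \<longrightarrow> dist (F h) (F k) < e"
  proof (intro allI impI)
    fix e :: real assume "e > 0"
    then obtain P where P: "eventually P (at (0::real))" "\<forall>x y. P x \<and> P y \<longrightarrow> dist (F x) (F y) < e"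
      using c by blast
    then obtain d where d: "d > 0" "\<forall>x. x \<noteq> 0 \<and> dist x 0 < d \<longrightarrow> P x"
      unfolding eventually_at by blast
    show "\<exists>d>0. \<forall>h k. 0 < \<bar>h\<bar> \<and> \<bar>h\<bar> < d \<and> 0 < \<bar>k\<bar> \<and> \<bar>k\<bar> < d \<longrightarrow> dist (F h) (F k) < e"
      using d P(2) by (intro exI[of _ d]) auto
  qed
next
  assume H: "\<forall>e>0. \<exists>d>0. \<forall>h k. 0 < \<bar>h\<bar> \<and> \<bar>h\<bar> < d \<and> 0 < \<bar>k\<bar> \<and> \<bar>k\<bar> < d \<longrightarrow> dist (F h) (F k) < e"
  have "cauchy_filter (filtermap F (at 0))"
    unfolding cauchy_filter_metric_filtermap
  proof (intro allI impI)
    fix e :: real assume "e > 0"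
    then obtain d where d: "d > 0" "\<forall>h k. 0 < \<bar>h\<bar> \<and> \<bar>h\<bar> < d \<and> 0 < \<bar>k\<bar> \<and> \<bar>k\<bar> < d \<longrightarrow> dist (F h) (F k) < e"
      using H by blast
    show "\<exists>P. eventually P (at (0::real)) \<and> (\<forall>x y. P x \<and> P y \<longrightarrow> dist (F x) (F y) < e)"
      using d by (intro exI[of _ "\<lambda>h. 0 < \<bar>h\<bar> \<and> \<bar>h\<bar> < d"]) (auto simp: eventually_at)
  qed
  moreover have "filtermap F (at (0::real)) \<noteq> bot" by (simp add: filtermap_bot_iff)
  ultimately obtain x where "filtermap F (at 0) \<le> nhds x"
    using complete_UNIV[unfolded complete_uniform, rule_format, of "filtermap F (at 0)"] by auto
  then show "\<exists>l. (F \<longlongrightarrow> l) (at 0)" unfolding filterlim_def by blast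
qed

lemma dense_le:
  fixes \<phi> :: "real \<Rightarrow> real"
  assumes W: "open W" and c: "continuous_on W \<phi>" and q: "\<And>q. q \<in> W \<Longrightarrow> q \<in> \<rat> \<Longrightarrow> \<phi> q \<le> c"
    and x: "x \<in> W"
  shows "\<phi> x \<le> c"
proof (rule ccontr)
  assume "\<not> \<phi> x \<le> c"
  then have xw: "x \<in> \<phi> -` {c<..} \<inter> W" using x by auto
  have "open (\<phi> -` {c<..} \<inter> W)" by (meson W c continuous_on_open_vimage open_greaterThan)
  then obtain e where e: "e > 0" "ball x e \<subseteq> \<phi> -` {c<..} \<inter> W"
    using xw open_contains_ball by (metis (no_types, lifting))
  obtain r where r: "r \<in> \<rat>" "x < r" "r < x + e" using Rats_dense_in_real[of x "x+e"] e by auto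
  then have "r \<in> ball x e" by (auto simp: dist_real_def)
  then have "r \<in> W" "\<phi> r > c" using e(2) by auto
  then show False using q[of r] r by auto
qed

lemma cont_shift:
  fixes \<xi> :: "real \<Rightarrow> 'a::real_normed_vector"
  assumes c: "continuous_on {0..t} \<xi>" and S: "\<And>x. x \<in> S \<Longrightarrow> x + h \<in> {0..t}"
  shows "continuous_on S (\<lambda>x. \<xi> (x + h))"
proof (rule continuous_on_compose2[OF c])
  show "continuous_on S (\<lambda>x. x + h)" by (intro continuous_intros)
  show "(\<lambda>x. x + h) ` S \<subseteq> {0..t}" using S by auto
qed

lemma CQ_equiv:
  fixes \<xi> :: "real \<Rightarrow> 'a::euclidean_space"
  assumes c: "continuous_on {0..t} \<xi>" and r: "r \<in> {0<..<t}"
  shows "(\<exists>l. (\<xi> has_vector_derivative l) (at r)) \<longleftrightarrow>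
    (\<forall>m::nat. \<exists>j::nat. \<forall>h\<in>\<rat>. \<forall>k\<in>\<rat>. (0<\<bar>h\<bar> \<and> \<bar>h\<bar> < 1/Suc j \<and> 0<\<bar>k\<bar> \<and> \<bar>k\<bar> < 1/Suc j
        \<and> r+h \<in> {0<..<t} \<and> r+k \<in> {0<..<t}) \<longrightarrow>
       dist ((1/h) *\<^sub>R (\<xi> (r+h) - \<xi> r)) ((1/k) *\<^sub>R (\<xi> (r+k) - \<xi> r)) \<le> 1/Suc m)"
  (is "?L \<longleftrightarrow> ?R")
proof -
  define \<Delta> where "\<Delta> = (\<lambda>h. (1/h) *\<^sub>R (\<xi> (r+h) - \<xi> r))"
  have "?L \<longleftrightarrow> (\<exists>l. (\<Delta> \<longlongrightarrow> l) (at 0))"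
    unfolding \<Delta>_def vd_quot ..
  also have "\<dots> \<longleftrightarrow> (\<forall>e>0. \<exists>d>0. \<forall>h k. 0 < \<bar>h\<bar> \<and> \<bar>h\<bar> < d \<and> 0 < \<bar>k\<bar> \<and> \<bar>k\<bar> < d \<longrightarrow> dist (\<Delta> h) (\<Delta> k) < e)"
    by (rule cauchy_at0)
  also have "\<dots> \<longleftrightarrow> ?R"
  proof
    assume H: "\<forall>e>0. \<exists>d>0. \<forall>h k. 0 < \<bar>h\<bar> \<and> \<bar>h\<bar> < d \<and> 0 < \<bar>k\<bar> \<and> \<bar>k\<bar> < d \<longrightarrow> dist (\<Delta> h) (\<Delta> k) < e"
    show ?R
    proof
      fix m :: nat
      obtain d where d: "d > 0" "\<forall>h k. 0 < \<bar>h\<bar> \<and> \<bar>h\<bar> < d \<and> 0 < \<bar>k\<bar> \<and> \<bar>k\<bar> < d \<longrightarrow> dist (\<Delta> h) (\<Delta> k) < 1/Suc m"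
        using H[rule_format, of "1/Suc m"] by auto
      obtain j where j: "inverse (real (Suc j)) < d" using reals_Archimedean[OF d(1)] by blast
      show "\<exists>j::nat. \<forall>h\<in>\<rat>. \<forall>k\<in>\<rat>. (0<\<bar>h\<bar> \<and> \<bar>h\<bar> < 1/Suc j \<and> 0<\<bar>k\<bar> \<and> \<bar>k\<bar> < 1/Suc j
        \<and> r+h \<in> {0<..<t} \<and> r+k \<in> {0<..<t}) \<longrightarrow>
       dist ((1/h) *\<^sub>R (\<xi> (r+h) - \<xi> r)) ((1/k) *\<^sub>R (\<xi> (r+k) - \<xi> r)) \<le> 1/Suc m"
      proof (intro exI[of _ j] ballI impI)
        fix h k :: real assume hk: "0<\<bar>h\<bar> \<and> \<bar>h\<bar> < 1/Suc j \<and> 0<\<bar>k\<bar> \<and> \<bar>k\<bar> < 1/Suc j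
        \<and> r+h \<in> {0<..<t} \<and> r+k \<in> {0<..<t}"
        then have "\<bar>h\<bar> < d" "\<bar>k\<bar> < d" using j by (auto simp: inverse_eq_divide)
        then have "dist (\<Delta> h) (\<Delta> k) < 1/Suc m" using d(2) hk by blast
        then show "dist ((1/h) *\<^sub>R (\<xi> (r+h) - \<xi> r)) ((1/k) *\<^sub>R (\<xi> (r+k) - \<xi> r)) \<le> 1/Suc m"
          unfolding \<Delta>_def by simp
      qed
    qed
  next
    assume R: ?R
    show "\<forall>e>0. \<exists>d>0. \<forall>h k. 0 < \<bar>h\<bar> \<and> \<bar>h\<bar> < d \<and> 0 < \<bar>k\<bar> \<and> \<bar>k\<bar> < d \<longrightarrow> dist (\<Delta> h) (\<Delta> k) < e"
    proof (intro allI impI)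
      fix e :: real assume e: "e > 0"
      obtain m where m: "inverse (real (Suc m)) < e" using reals_Archimedean[OF e] by blast
      obtain j where j: "\<forall>h\<in>\<rat>. \<forall>k\<in>\<rat>. (0<\<bar>h\<bar> \<and> \<bar>h\<bar> < 1/Suc j \<and> 0<\<bar>k\<bar> \<and> \<bar>k\<bar> < 1/Suc j
        \<and> r+h \<in> {0<..<t} \<and> r+k \<in> {0<..<t}) \<longrightarrow> dist (\<Delta> h) (\<Delta> k) \<le> 1/Suc m"
        using R unfolding \<Delta>_def by blast
      define W where "W = {h. 0 < \<bar>h\<bar> \<and> \<bar>h\<bar> < 1/Suc j \<and> 0 < r + h \<and> r + h < t}"
      have Wo: "open W" unfolding W_def
        by (intro open_Collect_conj open_Collect_less continuous_intros)
      have cx: "continuous_on W (\<lambda>x. \<xi> (r + x))"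
          using cont_shift[OF c, of W r] unfolding W_def by (auto simp: add.commute)
      have cD: "continuous_on W \<Delta>"
        unfolding \<Delta>_def by (intro continuous_intros cx) (auto simp: W_def)
      have step1: "dist (\<Delta> h) (\<Delta> k) \<le> 1/Suc m" if "h \<in> W" "k \<in> W" "k \<in> \<rat>" for h k
      proof (rule dense_le[OF Wo _ _ that(1), of "\<lambda>h. dist (\<Delta> h) (\<Delta> k)"])
        show "continuous_on W (\<lambda>h. dist (\<Delta> h) (\<Delta> k))" by (intro continuous_intros cD)
        show "\<And>q. q \<in> W \<Longrightarrow> q \<in> \<rat> \<Longrightarrow> dist (\<Delta> q) (\<Delta> k) \<le> 1/Suc m"
          using j that unfolding W_def by auto
      qed
      have step2: "dist (\<Delta> h) (\<Delta> k) \<le> 1/Suc m" if "h \<in> W" "k \<in> W" for h k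
      proof (rule dense_le[OF Wo _ _ that(2), of "\<lambda>k. dist (\<Delta> h) (\<Delta> k)"])
        show "continuous_on W (\<lambda>k. dist (\<Delta> h) (\<Delta> k))" by (intro continuous_intros cD)
        show "\<And>q. q \<in> W \<Longrightarrow> q \<in> \<rat> \<Longrightarrow> dist (\<Delta> h) (\<Delta> q) \<le> 1/Suc m"
          using step1 that by auto
      qed
      define d where "d = min (1/Suc j) (min r (t - r))"
      have "d > 0" using r by (auto simp: d_def)
      moreover have "dist (\<Delta> h) (\<Delta> k) < e" if "0 < \<bar>h\<bar> \<and> \<bar>h\<bar> < d \<and> 0 < \<bar>k\<bar> \<and> \<bar>k\<bar> < d" for h k
      proof -
        have "h \<in> W" "k \<in> W" using that unfolding W_def d_def by auto
        then have "dist (\<Delta> h) (\<Delta> k) \<le> 1/Suc m" by (rule step2)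
        then show ?thesis using m by (simp add: inverse_eq_divide)
      qed
      ultimately show "\<exists>d>0. \<forall>h k. 0 < \<bar>h\<bar> \<and> \<bar>h\<bar> < d \<and> 0 < \<bar>k\<bar> \<and> \<bar>k\<bar> < d \<longrightarrow> dist (\<Delta> h) (\<Delta> k) < e"
        by blast
    qed
  qed
  finally show ?thesis .
qed

lemma Dset_borel:
  fixes \<xi> :: "real \<Rightarrow> 'a::euclidean_space"
  assumes c: "continuous_on {0..t} \<xi>"
  shows "{r\<in>{0<..<t}. \<exists>l. (\<xi> has_vector_derivative l) (at r)} \<in> sets borel"
proof -
  define \<Delta> where "\<Delta> = (\<lambda>r h. (1/h) *\<^sub>R (\<xi> (r+h) - \<xi> r))"
  define B where "B = (\<lambda>(m::nat) (j::nat) h k. {r. (0<\<bar>h\<bar> \<and> \<bar>h\<bar> < 1/Suc j \<and> 0<\<bar>k\<bar> \<and> \<bar>k\<bar> < 1/Suc j)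
     \<and> r \<in> {0<..<t} \<and> r+h \<in> {0<..<t} \<and> r+k \<in> {0<..<t} \<and> dist (\<Delta> r h) (\<Delta> r k) > 1/Suc m})"
  have Bo: "open (B m j h k)" for m j h k
  proof (cases "0<\<bar>h\<bar> \<and> \<bar>h\<bar> < 1/Suc j \<and> 0<\<bar>k\<bar> \<and> \<bar>k\<bar> < 1/Suc j")
    case False
    then have "B m j h k = {}" unfolding B_def by blast
    then show ?thesis by simp
  next
    case True
    define J where "J = {r. 0 < r \<and> r < t \<and> 0 < r + h \<and> r + h < t \<and> 0 < r + k \<and> r + k < t}"
    have Jo: "open J" unfolding J_def
      by (intro open_Collect_conj open_Collect_less continuous_intros)
    have c1: "continuous_on J (\<lambda>r. \<xi> (r + h))" by (rule cont_shift[OF c]) (auto simp: J_def)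
    have c2: "continuous_on J (\<lambda>r. \<xi> (r + k))" by (rule cont_shift[OF c]) (auto simp: J_def)
    have c0: "continuous_on J \<xi>" by (rule continuous_on_subset[OF c]) (auto simp: J_def)
    have cc: "continuous_on J (\<lambda>r. dist (\<Delta> r h) (\<Delta> r k))"
      unfolding \<Delta>_def using c1 c2 c0 by (auto simp: add.commute intro!: continuous_intros)
    have "open ((\<lambda>r. dist (\<Delta> r h) (\<Delta> r k)) -` {1/Suc m<..} \<inter> J)"
      using cc Jo continuous_on_open_vimage open_greaterThan by blast
    moreover have "B m j h k = (\<lambda>r. dist (\<Delta> r h) (\<Delta> r k)) -` {1/Suc m<..} \<inter> J"
      using True unfolding B_def J_def by auto
    ultimately show ?thesis by simp
  qed
  have eq: "{r\<in>{0<..<t}. \<exists>l. (\<xi> has_vector_derivative l) (at r)} =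
     {0<..<t} \<inter> (\<Inter>m. \<Union>j. \<Inter>h\<in>\<rat>. \<Inter>k\<in>\<rat>. - B m j h k)"
  proof (intro set_eqI iffI)
    fix r assume "r \<in> {r\<in>{0<..<t}. \<exists>l. (\<xi> has_vector_derivative l) (at r)}"
    then have r: "r \<in> {0<..<t}" and d: "\<exists>l. (\<xi> has_vector_derivative l) (at r)" by auto
    have R: "\<forall>m::nat. \<exists>j::nat. \<forall>h\<in>\<rat>. \<forall>k\<in>\<rat>. (0<\<bar>h\<bar> \<and> \<bar>h\<bar> < 1/Suc j \<and> 0<\<bar>k\<bar> \<and> \<bar>k\<bar> < 1/Suc j
        \<and> r+h \<in> {0<..<t} \<and> r+k \<in> {0<..<t}) \<longrightarrow>
       dist ((1/h) *\<^sub>R (\<xi> (r+h) - \<xi> r)) ((1/k) *\<^sub>R (\<xi> (r+k) - \<xi> r)) \<le> 1/Suc m"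
      using d CQ_equiv[OF c r] by blast
    have "r \<in> (\<Union>j. \<Inter>h\<in>\<rat>. \<Inter>k\<in>\<rat>. - B m j h k)" for m
    proof -
      obtain j where j: "\<forall>h\<in>\<rat>. \<forall>k\<in>\<rat>. (0<\<bar>h\<bar> \<and> \<bar>h\<bar> < 1/Suc j \<and> 0<\<bar>k\<bar> \<and> \<bar>k\<bar> < 1/Suc j
        \<and> r+h \<in> {0<..<t} \<and> r+k \<in> {0<..<t}) \<longrightarrow>
       dist ((1/h) *\<^sub>R (\<xi> (r+h) - \<xi> r)) ((1/k) *\<^sub>R (\<xi> (r+k) - \<xi> r)) \<le> 1/Suc m"
        using R by blast
      have "r \<in> (\<Inter>h\<in>\<rat>. \<Inter>k\<in>\<rat>. - B m j h k)"
      proof (intro INT_I)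
        fix h k :: real assume hk: "h \<in> \<rat>" "k \<in> \<rat>"
        have jj: "(0<\<bar>h\<bar> \<and> \<bar>h\<bar> < 1/Suc j \<and> 0<\<bar>k\<bar> \<and> \<bar>k\<bar> < 1/Suc j
        \<and> r+h \<in> {0<..<t} \<and> r+k \<in> {0<..<t}) \<longrightarrow>
       dist ((1/h) *\<^sub>R (\<xi> (r+h) - \<xi> r)) ((1/k) *\<^sub>R (\<xi> (r+k) - \<xi> r)) \<le> 1/Suc m"
          using j hk by blast
        show "r \<in> - B m j h k" using jj unfolding B_def \<Delta>_def by (auto simp del: of_nat_Suc)
      qed
      then show ?thesis by blast
    qed
    then show "r \<in> {0<..<t} \<inter> (\<Inter>m. \<Union>j. \<Inter>h\<in>\<rat>. \<Inter>k\<in>\<rat>. - B m j h k)"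
      using r by blast
  next
    fix r assume H: "r \<in> {0<..<t} \<inter> (\<Inter>m. \<Union>j. \<Inter>h\<in>\<rat>. \<Inter>k\<in>\<rat>. - B m j h k)"
    then have r: "r \<in> {0<..<t}" by auto
    have "\<forall>m::nat. \<exists>j::nat. \<forall>h\<in>\<rat>. \<forall>k\<in>\<rat>. (0<\<bar>h\<bar> \<and> \<bar>h\<bar> < 1/Suc j \<and> 0<\<bar>k\<bar> \<and> \<bar>k\<bar> < 1/Suc j
        \<and> r+h \<in> {0<..<t} \<and> r+k \<in> {0<..<t}) \<longrightarrow>
       dist ((1/h) *\<^sub>R (\<xi> (r+h) - \<xi> r)) ((1/k) *\<^sub>R (\<xi> (r+k) - \<xi> r)) \<le> 1/Suc m"
    proof
      fix m :: nat
      obtain j where j: "r \<in> (\<Inter>h\<in>\<rat>. \<Inter>k\<in>\<rat>. - B m j h k)" using H by blast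
      show "\<exists>j::nat. \<forall>h\<in>\<rat>. \<forall>k\<in>\<rat>. (0<\<bar>h\<bar> \<and> \<bar>h\<bar> < 1/Suc j \<and> 0<\<bar>k\<bar> \<and> \<bar>k\<bar> < 1/Suc j
        \<and> r+h \<in> {0<..<t} \<and> r+k \<in> {0<..<t}) \<longrightarrow>
       dist ((1/h) *\<^sub>R (\<xi> (r+h) - \<xi> r)) ((1/k) *\<^sub>R (\<xi> (r+k) - \<xi> r)) \<le> 1/Suc m"
      proof (intro exI[of _ j] ballI impI)
        fix h k :: real assume hk: "h \<in> \<rat>" "k \<in> \<rat>" and
          c: "0<\<bar>h\<bar> \<and> \<bar>h\<bar> < 1/Suc j \<and> 0<\<bar>k\<bar> \<and> \<bar>k\<bar> < 1/Suc j
        \<and> r+h \<in> {0<..<t} \<and> r+k \<in> {0<..<t}"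
        have "r \<notin> B m j h k" using j hk by blast
        then show "dist ((1/h) *\<^sub>R (\<xi> (r+h) - \<xi> r)) ((1/k) *\<^sub>R (\<xi> (r+k) - \<xi> r)) \<le> 1/Suc m"
          using c r unfolding B_def \<Delta>_def by (auto simp del: of_nat_Suc)
      qed
    qed
    then show "r \<in> {r\<in>{0<..<t}. \<exists>l. (\<xi> has_vector_derivative l) (at r)}"
      using CQ_equiv[OF c r] r by auto
  qed
  have "(\<Inter>h\<in>\<rat>. \<Inter>k\<in>\<rat>. - B m j h k) \<in> sets borel" for m j
    by (rule borel_closed) (intro closed_INT ballI closed_Compl Bo)
  then have "(\<Union>j. \<Inter>h\<in>\<rat>. \<Inter>k\<in>\<rat>. - B m j h k) \<in> sets borel" for m
    by (intro sets.countable_UN) auto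
  then have "(\<Inter>m. \<Union>j. \<Inter>h\<in>\<rat>. \<Inter>k\<in>\<rat>. - B m j h k) \<in> sets borel"
    by (intro sets.countable_INT) auto
  moreover have "{0<..<t::real} \<in> sets borel" by (intro borel_open open_greaterThanLessThan)
  ultimately show ?thesis unfolding eq by (intro sets.Int)
qed

lemma vd_meas:
  fixes \<xi> :: "real \<Rightarrow> 'a::euclidean_space"
  assumes c: "continuous_on {0..t} \<xi>" and t: "t > 0"
  shows "(\<lambda>r. vector_derivative \<xi> (at r)) \<in> borel_measurable (lebesgue_on {0..t})"
proof -
  define D where "D = {r\<in>{0<..<t}. \<exists>l. (\<xi> has_vector_derivative l) (at r)}"
  have Db: "D \<in> sets borel" unfolding D_def by (rule Dset_borel[OF c])
  have bl: "sets borel \<subseteq> sets lebesgue" by force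
  have DL: "D \<inter> space (lebesgue_on {0..t}) \<in> sets (lebesgue_on {0..t})"
  proof -
    have "D \<inter> {0..t} \<in> sets lebesgue" using Db bl by (intro sets.Int) auto
    then show ?thesis by (simp add: sets_restrict_space_iff)
  qed
  define junk :: 'a where "junk = (SOME f'. False)"
  define w where "w = (\<lambda>r. if r \<in> D then vector_derivative \<xi> (at r) else junk)"
  define \<xi>c where "\<xi>c = (\<lambda>s. \<xi> (max 0 (min t s)))"
  have cc: "continuous_on UNIV \<xi>c" unfolding \<xi>c_def
    by (rule continuous_on_compose2[OF c]) (use t in \<open>auto intro!: continuous_intros\<close>)
  define Q where "Q = (\<lambda>(i::nat) r. real (Suc i) *\<^sub>R (\<xi>c (r + 1 / Suc i) - \<xi>c r))"
  have Qc: "continuous_on UNIV (Q i)" for i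
    unfolding Q_def by (intro continuous_intros continuous_on_compose2[OF cc]) auto
  have Qm: "Q i \<in> borel_measurable (lebesgue_on {0..t})" for i
    by (rule continuous_imp_measurable_on_sets_lebesgue) (auto intro: continuous_on_subset[OF Qc])
  have fm: "(\<lambda>r. if r \<in> D then Q i r else junk) \<in> borel_measurable (lebesgue_on {0..t})" for i
    by (rule measurable_If_set[OF Qm _ DL]) simp
  have wm: "w \<in> borel_measurable (lebesgue_on {0..t})"
  proof (rule borel_measurable_LIMSEQ_metric[OF fm])
    fix r assume "r \<in> space (lebesgue_on {0..t})"
    show "(\<lambda>i. if r \<in> D then Q i r else junk) \<longlonglongrightarrow> w r"
    proof (cases "r \<in> D")
      case False then show ?thesis by (simp add: w_def)
    next
      case True
      then have r: "0 < r" "r < t" and dif: "\<exists>l. (\<xi> has_vector_derivative l) (at r)" by (auto simp: D_def)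
      then have "(\<xi> has_vector_derivative vector_derivative \<xi> (at r)) (at r)"
        using vector_derivative_works differentiable_def has_vector_derivative_def
        by (metis vector_derivative_at)
      then have lim: "((\<lambda>h. (1/h) *\<^sub>R (\<xi> (r+h) - \<xi> r)) \<longlongrightarrow> vector_derivative \<xi> (at r)) (at 0)"
        by (simp add: vd_quot)
      have seq: "filterlim (\<lambda>i. 1 / real (Suc i)) (at 0) sequentially"
        by (rule filterlim_atI) (use LIMSEQ_inverse_real_of_nat in \<open>auto simp: inverse_eq_divide\<close>)
      have l2: "(\<lambda>i. (1/(1 / real (Suc i))) *\<^sub>R (\<xi> (r+1 / real (Suc i)) - \<xi> r)) \<longlonglongrightarrow> vector_derivative \<xi> (at r)"
        using filterlim_compose[OF lim seq] by (simp add: o_def)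
      obtain N where N: "inverse (real (Suc N)) < t - r" using reals_Archimedean[of "t - r"] r by auto
      have ev: "\<forall>\<^sub>F i in sequentially. (1/(1 / real (Suc i))) *\<^sub>R (\<xi> (r+1 / real (Suc i)) - \<xi> r) = Q i r"
        unfolding eventually_sequentially
      proof (intro exI[of _ N] allI impI)
        fix i assume "N \<le> i"
        then have "1 / real (Suc i) \<le> 1 / real (Suc N)" by (simp add: frac_le)
        then have "r + 1 / real (Suc i) < t" using N by (simp add: inverse_eq_divide)
        moreover have "0 < 1 / real (Suc i)" by simp
        ultimately show "(1/(1 / real (Suc i))) *\<^sub>R (\<xi> (r+1 / real (Suc i)) - \<xi> r) = Q i r"
          using r unfolding Q_def \<xi>c_def by simp
      qed
      have "(\<lambda>i. Q i r) \<longlonglongrightarrow> vector_derivative \<xi> (at r)"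
        using Lim_transform_eventually[OF l2 ev] .
      then show ?thesis using True by (simp add: w_def)
    qed
  qed
  have "w measurable_on {0..t}" using wm by (simp add: measurable_on_iff_borel_measurable)
  then have "(\<lambda>r. vector_derivative \<xi> (at r)) measurable_on {0..t}"
  proof (rule measurable_on_spike[where S="{0,t}"])
    show "negligible {0,t}" by auto
    fix r assume r: "r \<in> {0..t} - {0,t}"
    show "vector_derivative \<xi> (at r) = w r"
    proof (cases "r \<in> D")
      case True then show ?thesis by (simp add: w_def)
    next
      case False
      then have "\<not> (\<exists>l. (\<xi> has_vector_derivative l) (at r))" using r by (auto simp: D_def)
      then have "(\<lambda>f'. (\<xi> has_vector_derivative f') (at r)) = (\<lambda>_. False)" by auto
      then show ?thesis using False by (simp add: w_def junk_def vector_derivative_def)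
    qed
  qed
  then show ?thesis by (simp add: measurable_on_iff_borel_measurable)
qed

lemma lip_from_deriv:
  fixes f :: "real \<Rightarrow> real"
  assumes d: "\<And>r. f differentiable at r" and b: "\<And>r. \<bar>deriv f r\<bar> \<le> K"
  shows "\<bar>f a - f b\<bar> \<le> K * \<bar>a - b\<bar>"
proof -
  have D: "DERIV f x :> deriv f x" for x using d DERIV_deriv_iff_real_differentiable by blast
  have main: "\<bar>f q - f p\<bar> \<le> K * \<bar>q - p\<bar>" if "p < q" for p q
  proof -
    have "\<exists>z. p < z \<and> z < q \<and> f q - f p = (q - p) * deriv f z" by (rule MVT2[OF that]) (rule D)
    then obtain z where "f q - f p = (q - p) * deriv f z" by blast
    then have "\<bar>f q - f p\<bar> = \<bar>q - p\<bar> * \<bar>deriv f z\<bar>" by (simp add: abs_mult)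
    also have "\<dots> \<le> \<bar>q - p\<bar> * K" by (intro mult_left_mono b) auto
    finally show ?thesis by (simp add: mult.commute)
  qed
  show ?thesis
  proof (cases a b rule: linorder_cases)
    case less then show ?thesis using main[OF less] by (simp add: abs_minus_commute)
  next
    case equal then show ?thesis by simp
  next
    case greater then show ?thesis using main[OF greater] by simp
  qed
qed

lemma C2_props:
  fixes L :: "'a::euclidean_space \<Rightarrow> real \<Rightarrow> 'a \<Rightarrow> real"
  assumes "C2 (uncurry3 L)"
  shows "continuous_on UNIV (uncurry3 L)" and "\<And>x v r. (\<lambda>r. L x r v) differentiable at r"
proof -
  obtain f' where f': "\<And>z. (uncurry3 L has_derivative blinfun_apply (f' z)) (at z)"
    using assms unfolding C2_def by blast
  show "continuous_on UNIV (uncurry3 L)"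
    using f' has_derivative_continuous continuous_at_imp_continuous_on by blast
  fix x v :: 'a and r :: real
  have e: "(\<lambda>r. L x r v) = (\<lambda>r. uncurry3 L (x, r, v))" by (simp add: uncurry3_def)
  have "((\<lambda>r. (x, r, v)) has_derivative (\<lambda>h. (0, h, 0))) (at r)"
    by (auto intro!: derivative_eq_intros)
  then have "((\<lambda>r. uncurry3 L (x, r, v)) has_derivative (\<lambda>h. blinfun_apply (f' (x, r, v)) (0, h, 0))) (at r)"
    using has_derivative_compose[OF _ f'] by blast
  then show "(\<lambda>r. L x r v) differentiable at r" unfolding e differentiable_def by blast
qed

lemma lip_r:
  fixes L :: "'a::euclidean_space \<Rightarrow> real \<Rightarrow> 'a \<Rightarrow> real"
  assumes "C2 (uncurry3 L)" "partial_r_bounded L K"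
  shows "\<bar>L x a v - L x b v\<bar> \<le> K * \<bar>a - b\<bar>"
  using lip_from_deriv[of "\<lambda>r. L x r v" K a b] C2_props(2)[OF assms(1)] assms(2)
  unfolding partial_r_bounded_def by blast

lemma gronwall:
  fixes \<phi> :: "real \<Rightarrow> real"
  assumes c: "continuous_on {0..t} \<phi>" and K: "K \<ge> 0"
    and H: "\<And>s. s \<in> {0..t} \<Longrightarrow> \<phi> s \<le> A + K * integral {0..s} \<phi>"
    and s: "s \<in> {0..t}"
  shows "\<phi> s \<le> A * exp (K * s)"
proof -
  define I where "I = (\<lambda>x. integral {0..x} \<phi>)"
  define \<Psi> where "\<Psi> = (\<lambda>x. exp (- K * x) * (A + K * I x))"
  have Ic: "continuous_on {0..t} I" unfolding I_def
    by (rule indefinite_integral_continuous_1) (rule integrable_continuous_interval[OF c])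
  have Id: "(I has_real_derivative \<phi> x) (at x)" if "0 < x" "x < t" for x
    using integral_has_real_derivative[OF c, of x] that at_within_Icc_at[of 0 x t]
    unfolding I_def by auto
  have dec: "\<Psi> s \<le> \<Psi> 0"
  proof (rule DERIV_nonpos_imp_decreasing_open[of 0 s])
    show "0 \<le> s" using s by auto
    show "continuous_on {0..s} \<Psi>" unfolding \<Psi>_def
      by (intro continuous_intros continuous_on_subset[OF Ic]) (use s in auto)
    fix x assume x: "0 < x" "x < s"
    then have xt: "x < t" using s by auto
    have "(\<Psi> has_real_derivative (-K * exp (- K * x) * (A + K * I x) + exp (- K * x) * (K * \<phi> x))) (at x)"
      unfolding \<Psi>_def by (auto intro!: derivative_eq_intros Id x xt)
    moreover have "-K * exp (- K * x) * (A + K * I x) + exp (- K * x) * (K * \<phi> x) \<le> 0"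
    proof -
      have px: "\<phi> x \<le> A + K * I x" using H[of x] x xt unfolding I_def by auto
      have "K * \<phi> x \<le> K * (A + K * I x)" using mult_left_mono[OF px K] .
      then have "exp (- K * x) * (K * \<phi> x) \<le> exp (- K * x) * (K * (A + K * I x))"
        by (rule mult_left_mono) simp
      then show ?thesis by (simp add: algebra_simps)
    qed
    ultimately show "\<exists>y. (\<Psi> has_real_derivative y) (at x) \<and> y \<le> 0" by blast
  qed
  have "\<Psi> 0 = A" by (simp add: \<Psi>_def I_def)
  have "\<phi> s \<le> A + K * I s" using H[OF s] by (simp add: I_def)
  also have "\<dots> = exp (K * s) * \<Psi> s" by (simp add: \<Psi>_def exp_minus field_simps)
  also have "\<dots> \<le> exp (K * s) * A" using dec \<open>\<Psi> 0 = A\<close> by (intro mult_left_mono) auto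
  finally show ?thesis by (simp add: mult.commute)
qed

lemma line_bound:
  fixes L :: "'a::euclidean_space \<Rightarrow> real \<Rightarrow> 'a \<Rightarrow> real"
  assumes cL: "continuous_on UNIV (uncurry3 L)" and L2: "L2_at L 0 \<theta>b \<theta> c"
    and t: "t > 0" and yx: "norm (y - x) \<le> R"
    and min: "minimizer (\<lambda>z v. L z 0 v) t y x \<xi>"
  shows "integral {0..t} (lag_along (\<lambda>z v. L z 0 v) \<xi>) \<le> t * \<theta>b (R / t)"
proof -
  define w where "w = (1/t) *\<^sub>R (x - y)"
  define \<eta> where "\<eta> = (\<lambda>s::real. y + s *\<^sub>R w)"
  have der: "(\<eta> has_vector_derivative w) (at r)" for r
    unfolding \<eta>_def by (auto intro!: derivative_eq_intros)
  have vd: "vector_derivative \<eta> (at r) = w" for r by (rule vector_derivative_at[OF der])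
  have "\<eta> \<in> Gamma t y x"
    unfolding Gamma_def W11_def
  proof (intro CollectI conjI exI[of _ "\<lambda>_. w"] ballI)
    show "(\<lambda>_. w) absolutely_integrable_on {0..t}" by simp
    fix s assume "s \<in> {0..t}"
    then show "\<eta> s = \<eta> 0 + integral {0..s} (\<lambda>_. w)" by (simp add: \<eta>_def)
  next
    show "\<eta> 0 = y" by (simp add: \<eta>_def)
    show "\<eta> t = x" using t by (simp add: \<eta>_def w_def)
  qed
  have lag: "lag_along (\<lambda>z v. L z 0 v) \<eta> = (\<lambda>r. L (\<eta> r) 0 w)"
    by (simp add: lag_along_def vd)
  have cont: "continuous_on {0..t} (\<lambda>r. L (\<eta> r) 0 w)"
  proof -
    have "continuous_on {0..t} (\<lambda>r. uncurry3 L (\<eta> r, 0, w))"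
      by (rule continuous_on_compose2[OF cL]) (auto simp: \<eta>_def intro!: continuous_intros)
    then show ?thesis by (simp add: uncurry3_def)
  qed
  have lint: "lag_along (\<lambda>z v. L z 0 v) \<eta> integrable_on {0..t}"
    unfolding lag by (rule integrable_continuous_interval[OF cont])
  have nw: "norm w \<le> R / t" using yx t by (simp add: w_def norm_minus_commute divide_right_mono)
  have bd: "L (\<eta> r) 0 w \<le> \<theta>b (R / t)" for r
  proof -
    have "L (\<eta> r) 0 w \<le> \<theta>b (norm w)" using L2 unfolding L2_at_def by blast
    also have "\<dots> \<le> \<theta>b (R / t)"
    proof -
      have m: "mono_on {0..} \<theta>b" using L2 unfolding L2_at_def by blast
      have "0 \<le> norm w" by simp
      then show ?thesis using mono_onD[OF m, of "norm w" "R / t"] nw by (meson atLeast_iff order_trans)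
    qed
    finally show ?thesis .
  qed
  have "integral {0..t} (lag_along (\<lambda>z v. L z 0 v) \<xi>) \<le> integral {0..t} (lag_along (\<lambda>z v. L z 0 v) \<eta>)"
    using min \<open>\<eta> \<in> Gamma t y x\<close> lint unfolding minimizer_def by blast
  also have "\<dots> \<le> integral {0..t} (\<lambda>_. \<theta>b (R / t))"
    unfolding lag by (rule integral_le) (use cont bd in \<open>auto intro: integrable_continuous_interval\<close>)
  also have "\<dots> = t * \<theta>b (R / t)" using t by simp
  finally show ?thesis .
qed

theorem mainTheorem5:
  fixes L Llam :: "'a::euclidean_space \<Rightarrow> real \<Rightarrow> 'a \<Rightarrow> real"
    and \<theta>b0 \<theta>0 :: "real \<Rightarrow> real" and c0 K Klam t R u :: real
    and x y :: 'a and \<xi> :: "real \<Rightarrow> 'a" and U :: "real \<Rightarrow> real"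
  assumes C2L: "C2 (uncurry3 L)" and L1L: "L1 L" and L2L: "L2 L"
    and L3L: "K > 0" "partial_r_bounded L K"
    and L2L0: "L2_at L 0 \<theta>b0 \<theta>0 c0"
    and C2Llam: "C2 (uncurry3 Llam)" and L1Llam: "L1 Llam" and L2Llam: "L2 Llam"
    and Klam: "partial_r_bounded Llam Klam"
    and tpos: "t > 0" and Rpos: "R > 0" and yx: "norm (y - x) \<le> R"
    and min: "minimizer (\<lambda>z v. L z 0 v) t y x \<xi>"
    and ode_int: "(\<lambda>r. Llam (\<xi> r) (U r) (vector_derivative \<xi> (at r))) integrable_on {0..t}"
    and ode: "\<forall>s\<in>{0..t}. U s = u + integral {0..s} (\<lambda>r. Llam (\<xi> r) (U r) (vector_derivative \<xi> (at r)))"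
  shows "\<forall>s\<in>{0..t}. \<bar>U s\<bar> \<le>
           t * ((\<theta>b0 (R / t) + 2 * c0) * exp (Klam * t))
           + (t * Klam * exp (Klam * t) + 1) * \<bar>u\<bar>
           + exp (Klam * t) * integral {0..t} (\<lambda>r. \<bar>Llam (\<xi> r) 0 (vector_derivative \<xi> (at r))
                                                   - L (\<xi> r) 0 (vector_derivative \<xi> (at r))\<bar>)"
proof -
  have Kl: "Klam \<ge> 0" using Klam unfolding partial_r_bounded_def by (meson abs_ge_zero order_trans)
  have lipl: "\<And>z a b w. \<bar>Llam z a w - Llam z b w\<bar> \<le> Klam * \<bar>a - b\<bar>" by (rule lip_r[OF C2Llam Klam])
  have cL: "continuous_on UNIV (uncurry3 L)" by (rule C2_props(1)[OF C2L])
  have cLl: "continuous_on UNIV (uncurry3 Llam)" by (rule C2_props(1)[OF C2Llam])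
  obtain \<theta>bl \<theta>l cl where Ll0: "L2_at Llam 0 \<theta>bl \<theta>l cl" using L2Llam unfolding L2_def by blast
  have clpos: "cl > 0" using Ll0 unfolding L2_at_def by blast
  have hlow: "Llam z 0 w \<ge> - cl" for z w
  proof -
    have "Llam z 0 w \<ge> \<theta>l (norm w) - cl" "\<theta>l (norm w) \<ge> 0" using Ll0 unfolding L2_at_def by auto
    then show ?thesis by linarith
  qed
  have llow: "L z 0 w \<ge> - c0" for z w
  proof -
    have "L z 0 w \<ge> \<theta>0 (norm w) - c0" "\<theta>0 (norm w) \<ge> 0" using L2L0 unfolding L2_at_def by auto
    then show ?thesis by linarith
  qed
  have c0pos: "c0 > 0" and thb0: "\<theta>b0 (R / t) \<ge> 0" using L2L0 tpos Rpos unfolding L2_at_def by auto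
  have xiG: "\<xi> \<in> Gamma t y x" and lint0: "lag_along (\<lambda>z v. L z 0 v) \<xi> integrable_on {0..t}"
    using min unfolding minimizer_def by auto
  obtain g where g: "g absolutely_integrable_on {0..t}" "\<forall>s\<in>{0..t}. \<xi> s = \<xi> 0 + integral {0..s} g"
    using xiG unfolding Gamma_def W11_def by blast
  have cxi: "continuous_on {0..t} \<xi>"
  proof -
    have "continuous_on {0..t} (\<lambda>s. \<xi> 0 + integral {0..s} g)"
      using g(1) by (intro continuous_intros indefinite_integral_continuous_1) (simp add: absolutely_integrable_on_def)
    then show ?thesis by (rule continuous_on_eq) (metis g(2))
  qed
  define v where "v = (\<lambda>r. vector_derivative \<xi> (at r))"
  define f where "f = (\<lambda>r. Llam (\<xi> r) (U r) (v r))"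
  define h where "h = (\<lambda>r. Llam (\<xi> r) 0 (v r))"
  define l where "l = (\<lambda>r. L (\<xi> r) 0 (v r))"
  define D where "D = (\<lambda>r. f r - h r)"
  have fint: "f integrable_on {0..t}" using ode_int unfolding f_def v_def .
  have Ueq: "\<And>s. s \<in> {0..t} \<Longrightarrow> U s = u + integral {0..s} f" using ode unfolding f_def v_def by auto
  have cU: "continuous_on {0..t} U"
  proof -
    have "continuous_on {0..t} (\<lambda>s. u + integral {0..s} f)"
      by (intro continuous_intros indefinite_integral_continuous_1 fint)
    then show ?thesis by (rule continuous_on_eq) (use Ueq in auto)
  qed
  have Dle: "\<bar>D r\<bar> \<le> Klam * \<bar>U r\<bar>" for r
    using lipl[of "\<xi> r" "U r" "v r" 0] unfolding D_def f_def h_def by simp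
  have lint: "l integrable_on {0..t}" using lint0 by (simp add: lag_along_def l_def v_def)
  have vm: "v \<in> borel_measurable (lebesgue_on {0..t})" unfolding v_def by (rule vd_meas[OF cxi tpos])
  have xim: "\<xi> \<in> borel_measurable (lebesgue_on {0..t})"
    by (rule continuous_imp_measurable_on_sets_lebesgue[OF cxi]) auto
  have hm: "h \<in> borel_measurable (lebesgue_on {0..t})"
  proof -
    have "(\<lambda>r. (\<xi> r, (0::real), v r)) \<in> borel_measurable (lebesgue_on {0..t})"
      by (intro borel_measurable_Pair xim vm borel_measurable_const)
    then have "(\<lambda>r. uncurry3 Llam (\<xi> r, 0, v r)) \<in> borel_measurable (lebesgue_on {0..t})"
      by (rule borel_measurable_continuous_on[OF cLl])
    then show ?thesis by (simp add: h_def uncurry3_def)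
  qed
  have fm: "f \<in> borel_measurable (lebesgue_on {0..t})" by (rule integrable_imp_measurable[OF fint])
  have lm: "l \<in> borel_measurable (lebesgue_on {0..t})" by (rule integrable_imp_measurable[OF lint])
  have UKint: "(\<lambda>r. Klam * \<bar>U r\<bar>) integrable_on {0..t}"
    by (intro integrable_continuous_interval continuous_intros cU)
  have Dai: "D absolutely_integrable_on {0..t}"
  proof (rule measurable_bounded_by_integrable_imp_absolutely_integrable[OF _ _ UKint])
    show "D \<in> borel_measurable (lebesgue_on {0..t})" unfolding D_def using fm hm by measurable
    show "{0..t} \<in> sets lebesgue" by simp
    show "\<And>x. x \<in> {0..t} \<Longrightarrow> norm (D x) \<le> Klam * \<bar>U x\<bar>" using Dle by simp
  qed
  have Dint: "D integrable_on {0..t}" using Dai by (simp add: absolutely_integrable_on_def)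
  have hint: "h integrable_on {0..t}"
  proof -
    have "(\<lambda>r. f r - D r) integrable_on {0..t}" by (rule integrable_diff[OF fint Dint])
    moreover have "(\<lambda>r. f r - D r) = h" by (simp add: D_def fun_eq_iff)
    ultimately show ?thesis by simp
  qed
  have habs: "(\<lambda>r. \<bar>h r\<bar>) integrable_on {0..t}"
  proof -
    have "h absolutely_integrable_on {0..t}"
    proof (rule absolutely_integrable_integrable_bound[OF _ hint])
      show "(\<lambda>r. h r + 2 * cl) integrable_on {0..t}" by (intro integrable_add hint integrable_const_ivl)
      show "\<And>r. r \<in> {0..t} \<Longrightarrow> norm (h r) \<le> h r + 2 * cl"
      proof -
        fix r have "- cl \<le> h r" unfolding h_def by (rule hlow)
        then show "norm (h r) \<le> h r + 2 * cl" using clpos by (simp add: abs_le_iff)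
      qed
    qed
    then show ?thesis by (simp add: absolutely_integrable_on_def)
  qed
  have labs: "(\<lambda>r. \<bar>l r\<bar>) integrable_on {0..t}"
  proof -
    have "l absolutely_integrable_on {0..t}"
    proof (rule absolutely_integrable_integrable_bound[OF _ lint])
      show "(\<lambda>r. l r + 2 * c0) integrable_on {0..t}" by (intro integrable_add lint integrable_const_ivl)
      show "\<And>r. r \<in> {0..t} \<Longrightarrow> norm (l r) \<le> l r + 2 * c0"
      proof -
        fix r have "- c0 \<le> l r" unfolding l_def by (rule llow)
        then show "norm (l r) \<le> l r + 2 * c0" using c0pos by (simp add: abs_le_iff)
      qed
    qed
    then show ?thesis by (simp add: absolutely_integrable_on_def)
  qed
  have hlabs: "(\<lambda>r. \<bar>h r - l r\<bar>) integrable_on {0..t}"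
  proof -
    have "(\<lambda>r. h r - l r) absolutely_integrable_on {0..t}"
    proof (rule absolutely_integrable_integrable_bound[OF _ integrable_diff[OF hint lint]])
      show "(\<lambda>r. \<bar>h r\<bar> + \<bar>l r\<bar>) integrable_on {0..t}" by (intro integrable_add habs labs)
      show "\<And>r. r \<in> {0..t} \<Longrightarrow> norm (h r - l r) \<le> \<bar>h r\<bar> + \<bar>l r\<bar>" by simp
    qed
    then show ?thesis by (simp add: absolutely_integrable_on_def)
  qed
  define E where "E = integral {0..t} (\<lambda>r. \<bar>h r - l r\<bar>)"
  have E0: "E \<ge> 0" unfolding E_def by (rule integral_nonneg[OF hlabs]) simp
  have lbound: "integral {0..t} l \<le> t * \<theta>b0 (R / t)"
    using line_bound[OF cL L2L0 tpos yx min] by (simp add: lag_along_def l_def v_def)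
  have hbound: "integral {0..t} (\<lambda>r. \<bar>h r\<bar>) \<le> E + t * \<theta>b0 (R / t) + 2 * c0 * t"
  proof -
    have "integral {0..t} (\<lambda>r. \<bar>h r\<bar>) \<le> integral {0..t} (\<lambda>r. \<bar>h r - l r\<bar> + l r + 2 * c0)"
    proof (rule integral_le[OF habs])
      show "(\<lambda>r. \<bar>h r - l r\<bar> + l r + 2 * c0) integrable_on {0..t}"
        by (intro integrable_add hlabs lint integrable_const_ivl)
      show "\<And>r. r \<in> {0..t} \<Longrightarrow> \<bar>h r\<bar> \<le> \<bar>h r - l r\<bar> + l r + 2 * c0"
      proof -
        fix r have "- c0 \<le> l r" unfolding l_def by (rule llow)
        then show "\<bar>h r\<bar> \<le> \<bar>h r - l r\<bar> + l r + 2 * c0" using c0pos by linarith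
      qed
    qed
    also have "\<dots> = E + integral {0..t} l + 2 * c0 * t"
      using tpos unfolding E_def
      by (simp add: Henstock_Kurzweil_Integration.integral_add integrable_add hlabs lint integrable_const_ivl)
    finally show ?thesis using lbound by linarith
  qed
  define A where "A = \<bar>u\<bar> + E + t * \<theta>b0 (R / t) + 2 * c0 * t"
  have A0: "A \<ge> 0" using E0 thb0 c0pos tpos unfolding A_def by simp
  have gron_hyp: "\<bar>U s\<bar> \<le> A + Klam * integral {0..s} (\<lambda>r. \<bar>U r\<bar>)" if s: "s \<in> {0..t}" for s
  proof -
    have sub: "{0..s} \<subseteq> {0..t}" using s by auto
    have hs: "h integrable_on {0..s}" by (rule integrable_subinterval_real[OF hint sub])
    have Ds: "D integrable_on {0..s}" by (rule integrable_subinterval_real[OF Dint sub])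
    have habss: "(\<lambda>r. \<bar>h r\<bar>) integrable_on {0..s}" by (rule integrable_subinterval_real[OF habs sub])
    have Uabs: "(\<lambda>r. \<bar>U r\<bar>) integrable_on {0..s}"
      by (intro integrable_continuous_interval continuous_intros continuous_on_subset[OF cU sub])
    have "U s = u + integral {0..s} (\<lambda>r. h r + D r)" using Ueq[OF s] by (simp add: D_def)
    also have "\<dots> = u + integral {0..s} h + integral {0..s} D"
      by (simp add: Henstock_Kurzweil_Integration.integral_add[OF hs Ds])
    finally have Us: "U s = u + integral {0..s} h + integral {0..s} D" .
    have i1: "\<bar>integral {0..s} h\<bar> \<le> integral {0..s} (\<lambda>r. \<bar>h r\<bar>)"
      using Henstock_Kurzweil_Integration.integral_norm_bound_integral[OF hs habss] by simp
    have i2: "integral {0..s} (\<lambda>r. \<bar>h r\<bar>) \<le> integral {0..t} (\<lambda>r. \<bar>h r\<bar>)"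
      by (rule integral_subset_le[OF sub habss habs]) simp
    have i3: "\<bar>integral {0..s} D\<bar> \<le> integral {0..s} (\<lambda>r. Klam * \<bar>U r\<bar>)"
      using Henstock_Kurzweil_Integration.integral_norm_bound_integral[OF Ds integrable_subinterval_real[OF UKint sub]] Dle
      by simp
    have i4: "integral {0..s} (\<lambda>r. Klam * \<bar>U r\<bar>) = Klam * integral {0..s} (\<lambda>r. \<bar>U r\<bar>)"
      using integral_mult[OF Uabs, of Klam] by simp
    show ?thesis using Us i1 i2 i3 i4 hbound unfolding A_def by linarith
  qed
  have Uc: "continuous_on {0..t} (\<lambda>r. \<bar>U r\<bar>)" by (intro continuous_intros cU)
  have ek: "exp (Klam * t) \<le> t * Klam * exp (Klam * t) + 1"
  proof -
    have "1 + (- (Klam * t)) \<le> exp (- (Klam * t))" by (rule exp_ge_add_one_self)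
    then have "exp (Klam * t) * (1 - Klam * t) \<le> exp (Klam * t) * exp (- (Klam * t))"
      by (intro mult_left_mono) auto
    then show ?thesis by (simp add: exp_minus algebra_simps)
  qed
  show ?thesis
  proof
    fix s assume s: "s \<in> {0..t}"
    have "\<bar>U s\<bar> \<le> A * exp (Klam * s)" by (rule gronwall[OF Uc Kl gron_hyp s])
    also have "\<dots> \<le> A * exp (Klam * t)" using s Kl A0 by (intro mult_left_mono) (auto intro: mult_left_mono)
    also have "\<dots> = \<bar>u\<bar> * exp (Klam * t) + exp (Klam * t) * E + t * ((\<theta>b0 (R / t) + 2 * c0) * exp (Klam * t))"
      unfolding A_def by (simp add: algebra_simps)
    also have "\<dots> \<le> (t * Klam * exp (Klam * t) + 1) * \<bar>u\<bar> + exp (Klam * t) * E + t * ((\<theta>b0 (R / t) + 2 * c0) * exp (Klam * t))"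
      using mult_right_mono[OF ek, of "\<bar>u\<bar>"] by (simp add: mult.commute)
    finally show "\<bar>U s\<bar> \<le> t * ((\<theta>b0 (R / t) + 2 * c0) * exp (Klam * t))
           + (t * Klam * exp (Klam * t) + 1) * \<bar>u\<bar>
           + exp (Klam * t) * integral {0..t} (\<lambda>r. \<bar>Llam (\<xi> r) 0 (vector_derivative \<xi> (at r))
                                                   - L (\<xi> r) 0 (vector_derivative \<xi> (at r))\<bar>)"
      unfolding E_def h_def l_def v_def by linarith
  qed
qed

end
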